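(* Let $X_1,X_2$ be Banach spaces and $X=X_1\times X_2$ with norm $\|(x,y)\|^2=\|x\|_{X_1}^2+\|y\|_{X_2}^2$. For $j=1,2$ let $-\mathbf{A}_j:\mathrm{dom}(\mathbf{A}_j)\subset X_j\to X_j$ be the generator of a strongly continuous contraction semigroup $(\mathrm{e}^{-t\mathbf{A}_j})_{t\ge0}$, and let $\mathbf{B}_1:X_2\to X_1$ and $\mathbf{B}_2:X_1\to X_2$ be bounded linear operators. Let $\mathcal{T}(\tau)$, $\tau\ge0$, be the split-step operators and $\mathcal{C}$ the coupled operator defined in the context. Then for all $t\in[0,\infty)$ and $n\in\mathbb{N}$, \[ \|\mathcal{T}(t/n)^n\|\le \mathrm{e}^{t(\|\mathbf{B}_1\|+\|\mathbf{B}_2\|)}. \] Moreover, for every $t\ge0$ and every $x\in X$ we have $\lim_{n\to\infty}\mathcal{T}(t/n)^n x=\mathrm{e}^{-t\mathcal{C}}x$, and this convergence is uniform in $t$ on bounded time intervals.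
   Context: For $\tau\ge0$ set $\mathbf{E}_j(\tau)=\mathrm{e}^{-\tau\mathbf{A}_j}$ and $\mathbf{X}_j(\tau)=\int_0^\tau \mathrm{e}^{-\sigma\mathbf{A}_j}\,\mathrm{d}\sigma\,\mathbf{B}_j$ (the integral taken in the strong sense), so $\mathbf{X}_1(\tau):X_2\to X_1$, $\mathbf{X}_2(\tau):X_1\to X_2$. The split-step approximation operator on $X$ is the block operator matrix \[ \mathcal{T}(\tau)=\begin{pmatrix}\mathbf{E}_1(\tau) & \mathbf{X}_1(\tau)\\ \mathbf{X}_2(\tau)\mathbf{E}_1(\tau) & \mathbf{X}_2(\tau)\mathbf{X}_1(\tau)+\mathbf{E}_2(\tau)\end{pmatrix}, \] i.e. $\mathcal{T}(\tau)=\mathcal{T}_2(\tau)\mathcal{T}_1(\tau)$ with $\mathcal{T}_1(\tau)=\begin{pmatrix}\mathbf{E}_1(\tau)&\mathbf{X}_1(\tau)\\0&\mathbf{I}\end{pmatrix}$, $\mathcal{T}_2(\tau)=\begin{pmatrix}\mathbf{I}&0\\\mathbf{X}_2(\tau)&\mathbf{E}_2(\tau)\end{pmatrix}$. Let $\mathcal{A}=\mathrm{diag}(\mathbf{A}_1,\mathbf{A}_2)$ with $\mathrm{dom}(\mathcal{A})=\mathrm{dom}(\mathbf{A}_1)\times\mathrm{dom}(\mathbf{A}_2)$, $\mathcal{B}=\begin{pmatrix}0&\mathbf{B}_1\\\mathbf{B}_2&0\end{pmatrix}$, and $\mathcal{C}=\mathcal{A}-\mathcal{B}$ with $\mathrm{dom}(\mathcal{C})=\mathrm{dom}(\mathcal{A})$,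 i.e. $-\mathcal{C}(u,v)^{\mathrm T}=(-\mathbf{A}_1u+\mathbf{B}_1v,\ \mathbf{B}_2u-\mathbf{A}_2v)^{\mathrm T}$; $-\mathcal{C}$ generates a strongly continuous semigroup $(\mathrm{e}^{-t\mathcal{C}})_{t\ge0}$ on $X$. *)

theory Defs
  imports "HOL-Analysis.Analysis"
begin

text \<open>Strongly continuous (C0) semigroup of bounded linear operators on a Banach space,
  indexed by real times (only \<open>t \<ge> 0\<close> is relevant).\<close>
definition C0_semigroup :: "(real \<Rightarrow> 'a::banach \<Rightarrow> 'a) \<Rightarrow> bool" where
  "C0_semigroup T \<longleftrightarrow>
     (\<forall>t\<ge>0. bounded_linear (T t)) \<and>
     T 0 = id \<and>
     (\<forall>s\<ge>0. \<forall>t\<ge>0. T (s + t) = T s \<circ> T t) \<and>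
     (\<forall>x. ((\<lambda>t. T t x) \<longlongrightarrow> x) (at_right 0))"

definition contraction_semigroup :: "(real \<Rightarrow> 'a::banach \<Rightarrow> 'a) \<Rightarrow> bool" where
  "contraction_semigroup T \<longleftrightarrow> C0_semigroup T \<and> (\<forall>t\<ge>0. onorm (T t) \<le> 1)"

definition gen_dom :: "(real \<Rightarrow> 'a::real_normed_vector \<Rightarrow> 'a) \<Rightarrow> 'a set" where
  "gen_dom T = {x. \<exists>y. ((\<lambda>h. (T h x - x) /\<^sub>R h) \<longlongrightarrow> y) (at_right 0)}"

definition gen :: "(real \<Rightarrow> 'a::real_normed_vector \<Rightarrow> 'a) \<Rightarrow> 'a \<Rightarrow> 'a" where
  "gen T x = Lim (at_right 0) (\<lambda>h. (T h x - x) /\<^sub>R h)"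

text \<open>\<open>X_j(\<tau>) = \<integral>_0^\<tau> e^{-\<sigma> A_j} d\<sigma> B_j\<close> (strong integral), with \<open>E = e^{-\<cdot> A_j}\<close>.\<close>
definition Xop :: "(real \<Rightarrow> 'a::banach \<Rightarrow> 'a) \<Rightarrow> ('b \<Rightarrow> 'a) \<Rightarrow> real \<Rightarrow> 'b \<Rightarrow> 'a" where
  "Xop E B \<tau> v = integral {0..\<tau>} (\<lambda>\<sigma>. E \<sigma> (B v))"

definition split_T1 ::
  "(real \<Rightarrow> 'a::banach \<Rightarrow> 'a) \<Rightarrow> ('b::banach \<Rightarrow> 'a) \<Rightarrow> real \<Rightarrow> 'a \<times> 'b \<Rightarrow> 'a \<times> 'b" where
  "split_T1 E1 B1 \<tau> p = (E1 \<tau> (fst p) + Xop E1 B1 \<tau> (snd p), snd p)"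

definition split_T2 ::
  "(real \<Rightarrow> 'b::banach \<Rightarrow> 'b) \<Rightarrow> ('a::banach \<Rightarrow> 'b) \<Rightarrow> real \<Rightarrow> 'a \<times> 'b \<Rightarrow> 'a \<times> 'b" where
  "split_T2 E2 B2 \<tau> p = (fst p, Xop E2 B2 \<tau> (fst p) + E2 \<tau> (snd p))"

definition split_T ::
  "(real \<Rightarrow> 'a::banach \<Rightarrow> 'a) \<Rightarrow> (real \<Rightarrow> 'b::banach \<Rightarrow> 'b) \<Rightarrow> ('b \<Rightarrow> 'a) \<Rightarrow> ('a \<Rightarrow> 'b)
    \<Rightarrow> real \<Rightarrow> 'a \<times> 'b \<Rightarrow> 'a \<times> 'b" where
  "split_T E1 E2 B1 B2 \<tau> = split_T2 E2 B2 \<tau> \<circ> split_T1 E1 B1 \<tau>"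

end

theory Submission
  imports Defs
begin

lemma ubp:
  fixes F :: "nat \<Rightarrow> 'a::banach \<Rightarrow> 'b::real_normed_vector"
  assumes lin: "\<And>n. bounded_linear (F n)"
    and pw: "\<And>x. \<exists>B. \<forall>n. norm (F n x) \<le> B"
  shows "\<exists>M. \<forall>n. onorm (F n) \<le> M"
proof -
  define G where "G k = {x. \<forall>n. norm (F n x) \<le> real k}" for k :: nat
  have clo: "closed (G k)" for k
  proof -
    have "G k = (\<Inter>n. {x. norm (F n x) \<le> real k})" by (auto simp: G_def)
    moreover have "closed {x. norm (F n x) \<le> real k}" for n
      by (intro closed_Collect_le continuous_on_norm linear_continuous_on lin continuous_on_const)
    ultimately show ?thesis by auto
  qed
  have cover: "(\<Union>k. G k) = UNIV"
  proof -
    have "x \<in> (\<Union>k. G k)" for x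
    proof -
      obtain B where B: "\<forall>n. norm (F n x) \<le> B" using pw by blast
      have le: "B \<le> real (nat \<lceil>B\<rceil>)" by linarith
      have "norm (F n x) \<le> real (nat \<lceil>B\<rceil>)" for n using B le by (meson order_trans)
      then have "x \<in> G (nat \<lceil>B\<rceil>)" unfolding G_def by simp
      then show ?thesis by blast
    qed
    then show ?thesis by blast
  qed
  have "\<exists>k. interior (G k) \<noteq> {}"
  proof (rule ccontr)
    assume "\<not> ?thesis"
    then have "euclidean interior_of \<Union>(range G) = {}"
      by (intro Baire_category_alt) (auto simp: completely_metrizable_space_euclidean euclidean_interior_of clo closed_closedin[symmetric])
    then show False using cover by (simp add: euclidean_interior_of)
  qed
  then obtain k x0 where "x0 \<in> interior (G k)" by blast
  then obtain r where r: "r > 0" "ball x0 r \<subseteq> G k"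
    by (meson open_contains_ball_eq open_interior interior_subset order_trans)
  have small: "norm (F n y) \<le> 2 * real k" if "norm y < r" for n y
  proof -
    have "x0 + y \<in> G k" using r that by (auto simp: dist_norm)
    moreover have "x0 \<in> G k" using r by auto
    ultimately have "norm (F n (x0 + y)) \<le> real k" "norm (F n x0) \<le> real k" by (auto simp: G_def)
    moreover have eq: "F n y = F n (x0 + y) - F n x0" using linear_diff[OF bounded_linear.linear[OF lin]] by (metis add_diff_cancel_left')
    moreover have "norm (F n y) \<le> norm (F n (x0 + y)) + norm (F n x0)" unfolding eq by (rule norm_triangle_ineq4)
    ultimately show ?thesis by linarith
  qed
  have "onorm (F n) \<le> 4 * real k / r" for n
  proof (rule onorm_bound)
    show "0 \<le> 4 * real k / r" using r by simp
  next
    fix y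
    show "norm (F n y) \<le> 4 * real k / r * norm y"
    proof (cases "y = 0")
      case True then show ?thesis using linear_0[OF bounded_linear.linear[OF lin]] by simp
    next
      case False
      define c where "c = r / (2 * norm y)"
      have c: "c > 0" using False r by (simp add: c_def)
      have "norm (c *\<^sub>R y) < r" using False r by (simp add: c_def)
      then have "norm (F n (c *\<^sub>R y)) \<le> 2 * real k" by (rule small)
      moreover have "F n (c *\<^sub>R y) = c *\<^sub>R F n y" using linear_scale[OF bounded_linear.linear[OF lin]] by simp
      ultimately have "c * norm (F n y) \<le> 2 * real k" using c by simp
      then have "norm (F n y) \<le> 2 * real k / c" using c by (simp add: field_simps)
      also have "2 * real k / c = 4 * real k / r * norm y" using False r by (simp add: c_def field_simps)
      finally show ?thesis .
    qed
  qed
  then show ?thesis by blast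
qed

locale c0sg =
  fixes S :: "real \<Rightarrow> 'a::banach \<Rightarrow> 'a"
  assumes sg: "C0_semigroup S"
begin

lemma lin: "t \<ge> 0 \<Longrightarrow> bounded_linear (S t)"
  using sg by (simp add: C0_semigroup_def)

lemma S0id: "S 0 = id"
  using sg by (simp add: C0_semigroup_def)

lemma S0[simp]: "S 0 x = x"
  using S0id by simp

lemma comp: "s \<ge> 0 \<Longrightarrow> t \<ge> 0 \<Longrightarrow> S (s + t) x = S s (S t x)"
  using sg by (simp add: C0_semigroup_def)

lemma right: "((\<lambda>t. S t x) \<longlongrightarrow> x) (at_right 0)"
  using sg by (simp add: C0_semigroup_def)

lemma Sdiff: "t \<ge> 0 \<Longrightarrow> S t (x - y) = S t x - S t y"
  using lin linear_diff bounded_linear.linear by metis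
lemma Sadd: "t \<ge> 0 \<Longrightarrow> S t (x + y) = S t x + S t y"
  using lin linear_add bounded_linear.linear by metis
lemma Sscale: "t \<ge> 0 \<Longrightarrow> S t (c *\<^sub>R x) = c *\<^sub>R S t x"
  using lin linear_scale bounded_linear.linear by metis

lemma small: "e > 0 \<Longrightarrow> \<exists>d>0. \<forall>h. 0 \<le> h \<and> h < d \<longrightarrow> norm (S h x - x) < e"
proof -
  assume e: "e > 0"
  have "\<forall>\<^sub>F h in at_right 0. dist (S h x) x < e"
    using tendsto_iff[THEN iffD1, OF right] e by blast
  then obtain b where b: "b > 0" "\<forall>y>0. y < b \<longrightarrow> dist (S y x) x < e"
    by (auto simp: eventually_at_right_field)
  have "\<forall>h. 0 \<le> h \<and> h < b \<longrightarrow> norm (S h x - x) < e"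
  proof (intro allI impI)
    fix h assume h: "0 \<le> h \<and> h < b"
    show "norm (S h x - x) < e"
    proof (cases "h = 0")
      case True then show ?thesis using e by simp
    next
      case False then show ?thesis using b h by (simp add: dist_norm)
    qed
  qed
  then show ?thesis using b by blast
qed

lemma seq: "(\<And>n. u n \<ge> 0) \<Longrightarrow> u \<longlonglongrightarrow> 0 \<Longrightarrow> (\<lambda>n. S (u n) x) \<longlonglongrightarrow> x"
proof -
  assume u: "\<And>n. u n \<ge> 0" "u \<longlonglongrightarrow> 0"
  show ?thesis
  proof (rule LIMSEQ_I)
    fix e :: real assume "e > 0"
    then obtain d where d: "d > 0" "\<forall>h. 0 \<le> h \<and> h < d \<longrightarrow> norm (S h x - x) < e"
      using small by blast
    obtain N where "\<forall>n\<ge>N. norm (u n - 0) < d" using LIMSEQ_D[OF u(2) d(1)] by blast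
    then have "\<forall>n\<ge>N. norm (S (u n) x - x) < e" using d u(1) by auto
    then show "\<exists>N. \<forall>n\<ge>N. norm (S (u n) x - x) < e" by blast
  qed
qed

lemma loc_bound0: "\<exists>d>0. \<exists>M. \<forall>t. 0 \<le> t \<and> t \<le> d \<longrightarrow> onorm (S t) \<le> M"
proof (rule ccontr)
  assume neg: "\<not> (\<exists>d>0. \<exists>M. \<forall>t. 0 \<le> t \<and> t \<le> d \<longrightarrow> onorm (S t) \<le> M)"
  have "\<exists>t. 0 \<le> t \<and> t \<le> inverse (real (Suc n)) \<and> onorm (S t) > real n" for n
  proof -
    have pos: "inverse (real (Suc n)) > 0" by simp
    from neg have "\<forall>d>0. \<forall>M. \<exists>t. 0 \<le> t \<and> t \<le> d \<and> M < onorm (S t)" by (auto simp: not_le)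
    then show ?thesis using pos by blast
  qed
  then obtain u where u: "\<And>n. 0 \<le> u n \<and> u n \<le> inverse (real (Suc n)) \<and> onorm (S (u n)) > real n"
    by metis
  have u0: "u \<longlonglongrightarrow> 0"
    by (rule tendsto_sandwich[OF _ _ tendsto_const LIMSEQ_inverse_real_of_nat]) (use u in auto)
  have "\<exists>B. \<forall>n. norm (S (u n) x) \<le> B" for x
  proof -
    have "convergent (\<lambda>n. S (u n) x)" using seq[OF _ u0] u by (auto simp: convergent_def)
    then have "Bseq (\<lambda>n. S (u n) x)" by (rule convergent_imp_Bseq)
    then show ?thesis by (auto simp: Bseq_def)
  qed
  then obtain M where M: "\<forall>n. onorm (S (u n)) \<le> M"
    using ubp[of "\<lambda>n. S (u n)"] lin u by blast
  obtain n :: nat where "M < real n" using reals_Archimedean2 by blast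
  then show False using M[rule_format, of n] u[of n] by linarith
qed

lemma loc_bound: "\<exists>K\<ge>1. \<forall>t. 0 \<le> t \<and> t \<le> T \<longrightarrow> onorm (S t) \<le> K"
proof -
  obtain d M where d: "d > 0" and M: "\<forall>t. 0 \<le> t \<and> t \<le> d \<longrightarrow> onorm (S t) \<le> M"
    using loc_bound0 by blast
  define M' where "M' = max 1 M"
  have M'1: "M' \<ge> 1" by (simp add: M'_def)
  have main: "\<forall>t. 0 \<le> t \<and> t \<le> real k * d \<longrightarrow> onorm (S t) \<le> M' ^ (k+1)" for k
  proof (induction k)
    case 0
    have "onorm (S 0) \<le> 1" using S0id onorm_id_le by (simp add: id_def)
    then show ?case using M'1 by (auto simp del: S0)
  next
    case (Suc k)
    show ?case
    proof (intro allI impI)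
      fix t assume t: "0 \<le> t \<and> t \<le> real (Suc k) * d"
      show "onorm (S t) \<le> M' ^ (Suc k + 1)"
      proof (cases "t \<le> d")
        case True
        then have "onorm (S t) \<le> M'" using M t by (auto simp: M'_def)
        also have "M' \<le> M' ^ (Suc k + 1)" using M'1
          by (metis One_nat_def le_add2 power_increasing power_one_right)
        finally show ?thesis .
      next
        case False
        have eq: "S t = S (t - d) \<circ> S d"
        proof
          fix x show "S t x = (S (t - d) \<circ> S d) x" using comp[of "t-d" d x] False d by simp
        qed
        have "onorm (S t) \<le> onorm (S (t - d)) * onorm (S d)"
          unfolding eq using False d by (intro onorm_compose lin) auto
        also have "\<dots> \<le> M' ^ (k+1) * M'"
        proof (rule mult_mono)
          show "onorm (S (t - d)) \<le> M' ^ (k + 1)" using Suc False t by (auto simp: algebra_simps)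
          show "onorm (S d) \<le> M'" using M[rule_format, of d] d by (simp add: M'_def le_max_iff_disj)
          show "0 \<le> M' ^ (k + 1)" using M'1 by simp
          show "0 \<le> onorm (S d)" using d by (intro onorm_pos_le lin) simp
        qed
        also have "\<dots> = M' ^ (Suc k + 1)" by simp
        finally show ?thesis .
      qed
    qed
  qed
  obtain k :: nat where "T < real k * d" using ex_less_of_nat_mult[OF d] by blast
  then have "\<forall>t. 0 \<le> t \<and> t \<le> T \<longrightarrow> onorm (S t) \<le> M' ^ (k+1)" using main[of k] by auto
  moreover have "M' ^ (k+1) \<ge> 1" using one_le_power[OF M'1, of "k+1"] .
  ultimately show ?thesis by blast
qed

lemma nb: "0 \<le> t \<Longrightarrow> onorm (S t) \<le> K \<Longrightarrow> norm (S t x) \<le> K * norm x"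
  by (meson lin mult_right_mono norm_ge_zero onorm order_trans)

lemma diff_bound:
  assumes r: "0 \<le> r" and s: "0 \<le> s" and K: "\<forall>t. 0 \<le> t \<and> t \<le> max r s \<longrightarrow> onorm (S t) \<le> K"
  shows "norm (S r x - S s x) \<le> K * norm (S \<bar>r - s\<bar> x - x)"
proof -
  have *: "norm (S b x - S a x) \<le> K * norm (S (b - a) x - x)" if "0 \<le> a" "a \<le> b" "b \<le> max r s" for a b
  proof -
    have "S b x = S a (S (b - a) x)" using comp[of a "b - a" x] that by simp
    then have "S b x - S a x = S a (S (b - a) x - x)" using Sdiff that by simp
    then show ?thesis using nb[of a K] K that by auto
  qed
  show ?thesis
  proof (cases "s \<le> r")
    case True then show ?thesis using *[of s r] s by auto
  next
    case False then show ?thesis using *[of r s] r by (auto simp: norm_minus_commute)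
  qed
qed

lemma orbit_cont: "continuous_on {0..} (\<lambda>t. S t x)"
proof (unfold continuous_on_iff, intro ballI allI impI)
  fix s e :: real assume s': "s \<in> {0..}" and e: "0 < e"
  have s: "0 \<le> s" using s' by simp
  obtain K where K: "K \<ge> 1" "\<forall>t. 0 \<le> t \<and> t \<le> s + 1 \<longrightarrow> onorm (S t) \<le> K"
    using loc_bound by blast
  obtain d where d: "d > 0" "\<forall>h. 0 \<le> h \<and> h < d \<longrightarrow> norm (S h x - x) < e / K"
    using small[of "e / K"] e K by (metis divide_pos_pos less_le_trans zero_less_one)
  show "\<exists>d>0. \<forall>r\<in>{0..}. dist r s < d \<longrightarrow> dist (S r x) (S s x) < e"
  proof (intro exI[of _ "min d 1"] conjI ballI impI)
    fix r :: real assume r': "r \<in> {0..}" "dist r s < min d 1"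
    have r: "0 \<le> r" "dist r s < min d 1" using r' by auto
    have "dist (S r x) (S s x) \<le> K * norm (S \<bar>r - s\<bar> x - x)"
      unfolding dist_norm using K r s by (intro diff_bound) (auto simp: dist_real_def)
    also have "\<dots> < K * (e / K)" using d r K by (intro mult_strict_left_mono) (auto simp: dist_real_def)
    also have "\<dots> = e" using K by simp
    finally show "dist (S r x) (S s x) < e" .
  qed (use d in auto)
qed

lemma orbit_cont_on: "continuous_on {0..T} (\<lambda>t. S t x)"
  by (rule continuous_on_subset[OF orbit_cont]) auto

lemma orbit_int: "(\<lambda>t. S t x) integrable_on {0..T}"
  by (rule integrable_continuous_interval[OF orbit_cont_on])

end

lemma int_bound:
  fixes f :: "real \<Rightarrow> 'a::banach"
  assumes "f integrable_on {a..b}" "a \<le> b" "\<And>r. r \<in> {a..b} \<Longrightarrow> norm (f r) \<le> B"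
  shows "norm (integral {a..b} f) \<le> B * (b - a)"
proof -
  have "norm (f a) \<le> B" using assms(2) by (intro assms(3)) simp
  then have B: "0 \<le> B" using norm_ge_zero order_trans by blast
  have "norm (integral {a..b} f) \<le> B * Henstock_Kurzweil_Integration.content {a..b}"
    by (rule has_integral_bound_real[OF B, of "{}"]) (use assms in auto)
  then show ?thesis using assms(2) by simp
qed

lemma rderiv:
  fixes g :: "real \<Rightarrow> 'a::banach"
  assumes cont: "continuous_on {a..b} g" and u: "a \<le> u" "u < b"
  shows "((\<lambda>h. (integral {a..u+h} g - integral {a..u} g) /\<^sub>R h) \<longlongrightarrow> g u) (at_right 0)"
proof (unfold tendsto_iff, intro allI impI)
  fix e :: real assume e: "e > 0"
  have uab: "u \<in> {a..b}" using u by simp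
  obtain d where d: "d > 0" "\<forall>r\<in>{a..b}. dist r u < d \<longrightarrow> dist (g r) (g u) < e / 2"
    using cont uab e unfolding continuous_on_iff by (metis half_gt_zero)
  have "dist ((integral {a..u+h} g - integral {a..u} g) /\<^sub>R h) (g u) < e"
    if h: "0 < h" "h < min d (b - u)" for h
  proof -
    have int: "g integrable_on {a..u+h}"
      by (rule integrable_continuous_interval, rule continuous_on_subset[OF cont]) (use h in auto)
    have "integral {a..u} g + integral {u..u+h} g = integral {a..u+h} g"
      by (rule Henstock_Kurzweil_Integration.integral_combine) (use u h int in auto)
    then have eq1: "integral {a..u+h} g - integral {a..u} g = integral {u..u+h} g" by (simp add: algebra_simps)
    have intu: "g integrable_on {u..u+h}"
      by (rule integrable_continuous_interval, rule continuous_on_subset[OF cont]) (use h u in auto)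
    have eq2: "integral {u..u+h} (\<lambda>r. g r - g u) = integral {u..u+h} g - h *\<^sub>R g u"
      using integral_diff[OF intu integrable_const_ivl] h by simp
    have "norm (integral {u..u+h} (\<lambda>r. g r - g u)) \<le> e / 2 * (u + h - u)"
    proof (rule int_bound)
      show "(\<lambda>r. g r - g u) integrable_on {u..u + h}" using intu integrable_const_ivl by (rule integrable_diff)
      show "u \<le> u + h" using h by simp
      fix r assume r: "r \<in> {u..u+h}"
      then have "dist (g r) (g u) < e / 2" using d h u by (auto simp: dist_real_def)
      then show "norm (g r - g u) \<le> e / 2" by (simp add: dist_norm)
    qed
    then have N: "norm (integral {u..u+h} g - h *\<^sub>R g u) \<le> e / 2 * h" using eq2 by simp
    have eq3: "(integral {a..u+h} g - integral {a..u} g) /\<^sub>R h - g u = (1/h) *\<^sub>R (integral {u..u+h} g - h *\<^sub>R g u)"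
      using h eq1 by (simp add: algebra_simps divide_inverse)
    have "dist ((integral {a..u+h} g - integral {a..u} g) /\<^sub>R h) (g u) = norm ((1/h) *\<^sub>R (integral {u..u+h} g - h *\<^sub>R g u))"
      unfolding dist_norm eq3 by simp
    also have "\<dots> = (1/h) * norm (integral {u..u+h} g - h *\<^sub>R g u)" using h by simp
    also have "\<dots> \<le> (1/h) * (e / 2 * h)" using N h by (intro mult_left_mono) auto
    also have "\<dots> = e / 2" using h by simp
    finally have "dist ((integral {a..u+h} g - integral {a..u} g) /\<^sub>R h) (g u) \<le> e / 2" .
    then show ?thesis using e by linarith
  qed
  moreover have "min d (b - u) > 0" using d u by simp
  ultimately show "\<forall>\<^sub>F h in at_right 0. dist ((integral {a..u+h} g - integral {a..u} g) /\<^sub>R h) (g u) < e"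
    unfolding eventually_at_right_field by blast
qed

context c0sg begin

lemma commute: "0 \<le> s \<Longrightarrow> 0 \<le> t \<Longrightarrow> S s (S t x) = S t (S s x)"
  by (metis comp add.commute)

lemma Ideriv: "0 \<le> u \<Longrightarrow>
  ((\<lambda>h. (integral {0..u+h} (\<lambda>r. S r x) - integral {0..u} (\<lambda>r. S r x)) /\<^sub>R h) \<longlongrightarrow> S u x) (at_right 0)"
  by (rule rderiv[OF orbit_cont_on[of "u+1"]]) auto

lemma Ideriv0: "((\<lambda>h. integral {0..h} (\<lambda>r. S r x) /\<^sub>R h) \<longlongrightarrow> x) (at_right 0)"
  using Ideriv[of 0 x] by simp

lemma KI:
  assumes h: "0 \<le> h" and t: "0 \<le> t"
  shows "S h (integral {0..t} (\<lambda>r. S r x)) = integral {0..t+h} (\<lambda>r. S r x) - integral {0..h} (\<lambda>r. S r x)"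
proof -
  have "S h (integral {0..t} (\<lambda>r. S r x)) = integral {0..t} (S h \<circ> (\<lambda>r. S r x))"
    by (rule integral_linear[symmetric, OF orbit_int lin[OF h]])
  also have "\<dots> = integral {0..t} ((\<lambda>r. S r x) \<circ> (+) h)"
    by (rule integral_cong) (use h comp in auto)
  also have "\<dots> = integral {0+h..t+h} (\<lambda>r. S r x)" by (rule integral_shift_Icc_real)
  also have "\<dots> = integral {0..t+h} (\<lambda>r. S r x) - integral {0..h} (\<lambda>r. S r x)"
    using Henstock_Kurzweil_Integration.integral_combine[of 0 h "t+h" "\<lambda>r. S r x", OF _ _ orbit_int] h t
    by (simp add: algebra_simps)
  finally show ?thesis .
qed

lemma gen_lim: "x \<in> gen_dom S \<Longrightarrow> ((\<lambda>h. (S h x - x) /\<^sub>R h) \<longlongrightarrow> gen S x) (at_right 0)"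
  unfolding gen_dom_def gen_def using tendsto_Lim[OF trivial_limit_at_right_real] by blast

lemma gen_domI: "((\<lambda>h. (S h x - x) /\<^sub>R h) \<longlongrightarrow> y) (at_right 0) \<Longrightarrow> x \<in> gen_dom S \<and> gen S x = y"
  unfolding gen_dom_def gen_def using tendsto_Lim[OF trivial_limit_at_right_real] by blast

lemma orbit_dom:
  assumes x: "x \<in> gen_dom S" and t: "0 \<le> t"
  shows "S t x \<in> gen_dom S \<and> gen S (S t x) = S t (gen S x)"
proof (rule gen_domI)
  have lim: "((\<lambda>h. S t ((S h x - x) /\<^sub>R h)) \<longlongrightarrow> S t (gen S x)) (at_right 0)"
    by (rule bounded_linear.tendsto[OF lin[OF t] gen_lim[OF x]])
  have "\<forall>\<^sub>F h in at_right 0. S t ((S h x - x) /\<^sub>R h) = (S h (S t x) - S t x) /\<^sub>R h"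
  proof (rule eventually_mono[OF eventually_at_right_less])
    fix h :: real assume h: "0 < h"
    have "S h (S t x) = S t (S h x)" using comp[of h t x] comp[of t h x] h t by (simp add: add.commute)
    then show "S t ((S h x - x) /\<^sub>R h) = (S h (S t x) - S t x) /\<^sub>R h"
      using t by (simp add: Sscale Sdiff)
  qed
  then show "((\<lambda>h. (S h (S t x) - S t x) /\<^sub>R h) \<longlongrightarrow> S t (gen S x)) (at_right 0)"
    using lim tendsto_cong by fastforce
qed

lemma int_formula:
  assumes x: "x \<in> gen_dom S" and t: "0 \<le> t"
  shows "S t x - x = integral {0..t} (\<lambda>r. S r (gen S x))"
proof -
  define y where "y = gen S x"
  define I where "I u = integral {0..u} (\<lambda>r. S r x)" for u
  define q where "q h = (S h x - x) /\<^sub>R h" for h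
  have q: "(q \<longlongrightarrow> y) (at_right 0)" unfolding q_def y_def by (rule gen_lim[OF x])
  have I0: "I 0 = 0" by (simp add: I_def)
  have lim1: "((\<lambda>h. (I (t+h) - I t) /\<^sub>R h - (I (0+h) - I 0) /\<^sub>R h) \<longlongrightarrow> S t x - x) (at_right 0)"
    unfolding I_def using Ideriv[OF t] Ideriv[of 0 x] by (intro tendsto_diff) auto
  obtain K where K: "K \<ge> 1" "\<forall>r. 0 \<le> r \<and> r \<le> t \<longrightarrow> onorm (S r) \<le> K" using loc_bound by blast
  define P where "P h = integral {0..t} (\<lambda>r. S r (q h))" for h
  define J where "J = integral {0..t} (\<lambda>r. S r y)"
  have "((\<lambda>h. P h - J) \<longlongrightarrow> 0) (at_right 0)"
  proof (rule Lim_null_comparison)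
    show "\<forall>\<^sub>F h in at_right 0. norm (P h - J) \<le> K * t * norm (q h - y)"
    proof (rule always_eventually, rule allI)
      fix h
      have "P h - J = integral {0..t} (\<lambda>r. S r (q h - y))"
      proof -
        have "P h - J = integral {0..t} (\<lambda>r. S r (q h) - S r y)"
          unfolding P_def J_def by (rule integral_diff[symmetric, OF orbit_int orbit_int])
        also have "\<dots> = integral {0..t} (\<lambda>r. S r (q h - y))"
          by (rule integral_cong) (simp add: Sdiff)
        finally show ?thesis .
      qed
      also have "norm \<dots> \<le> (K * norm (q h - y)) * (t - 0)"
        by (rule int_bound) (use t K orbit_int nb in auto)
      finally show "norm (P h - J) \<le> K * t * norm (q h - y)" by (simp add: mult_ac)
    qed
    have "((\<lambda>h. norm (q h - y)) \<longlongrightarrow> 0) (at_right 0)"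
      using q by (simp add: tendsto_norm_zero_iff LIM_zero)
    then show "((\<lambda>h. K * t * norm (q h - y)) \<longlongrightarrow> 0) (at_right 0)"
      by (rule tendsto_mult_right_zero)
  qed
  then have limP: "(P \<longlongrightarrow> J) (at_right 0)" by (simp add: LIM_zero_iff)
  have "\<forall>\<^sub>F h in at_right 0. (I (t+h) - I t) /\<^sub>R h - (I (0+h) - I 0) /\<^sub>R h = P h"
  proof (rule eventually_mono[OF eventually_at_right_less])
    fix h :: real assume h: "0 < h"
    have "S h (I t) = I (t+h) - I h" unfolding I_def using KI h t by simp
    moreover have "S h (I t) = integral {0..t} (\<lambda>r. S r (S h x))"
    proof -
      have "S h (I t) = integral {0..t} (S h \<circ> (\<lambda>r. S r x))"
        unfolding I_def by (rule integral_linear[symmetric, OF orbit_int lin]) (use h in simp)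
      also have "\<dots> = integral {0..t} (\<lambda>r. S r (S h x))"
        by (rule integral_cong) (use h in \<open>auto simp: commute\<close>)
      finally show ?thesis .
    qed
    moreover have "P h = (integral {0..t} (\<lambda>r. S r (S h x)) - I t) /\<^sub>R h"
    proof -
      have "P h = integral {0..t} (\<lambda>r. (1/h) *\<^sub>R (S r (S h x) - S r x))"
        unfolding P_def q_def by (rule integral_cong) (auto simp: Sscale Sdiff scaleR_diff_right divide_inverse)
      also have "\<dots> = (1/h) *\<^sub>R integral {0..t} (\<lambda>r. S r (S h x) - S r x)"
        by (rule integral_cmul)
      also have "\<dots> = (1/h) *\<^sub>R (integral {0..t} (\<lambda>r. S r (S h x)) - I t)"
        unfolding I_def using integral_diff[OF orbit_int orbit_int] by simp
      finally show ?thesis by (simp add: divide_inverse)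
    qed
    ultimately have "P h = (I (t+h) - I h - I t) /\<^sub>R h" by simp
    then show "(I (t+h) - I t) /\<^sub>R h - (I (0+h) - I 0) /\<^sub>R h = P h"
      using I0 by (simp add: scaleR_diff_right)
  qed
  then have "(P \<longlongrightarrow> S t x - x) (at_right 0)" using lim1 tendsto_cong by fastforce
  then have "S t x - x = J" using limP tendsto_unique[OF trivial_limit_at_right_real] by blast
  then show ?thesis unfolding J_def y_def .
qed

lemma dense_dom:
  assumes e: "e > 0"
  shows "\<exists>x'\<in>gen_dom S. norm (x - x') < e"
proof -
  define I where "I u = integral {0..u} (\<lambda>r. S r x)" for u
  have I0: "I 0 = 0" by (simp add: I_def)
  have indom: "(1/s) *\<^sub>R I s \<in> gen_dom S" if s: "s > 0" for s
  proof -
    have lim: "((\<lambda>h. (1/s) *\<^sub>R ((I (s+h) - I s) /\<^sub>R h - (I (0+h) - I 0) /\<^sub>R h)) \<longlongrightarrow> (1/s) *\<^sub>R (S s x - x)) (at_right 0)"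
      unfolding I_def using Ideriv[of s x] Ideriv[of 0 x] s by (intro tendsto_scaleR tendsto_const tendsto_diff) auto
    have "\<forall>\<^sub>F h in at_right 0. (1/s) *\<^sub>R ((I (s+h) - I s) /\<^sub>R h - (I (0+h) - I 0) /\<^sub>R h) = (S h ((1/s) *\<^sub>R I s) - (1/s) *\<^sub>R I s) /\<^sub>R h"
    proof (rule eventually_mono[OF eventually_at_right_less])
      fix h :: real assume h: "0 < h"
      have eq: "S h (I s) = I (s+h) - I h" unfolding I_def using KI h s by simp
      have e2: "S h ((1/s) *\<^sub>R I s) - (1/s) *\<^sub>R I s = (1/s) *\<^sub>R (I (s+h) - I h - I s)"
        unfolding Sscale[OF less_imp_le[OF h]] eq by (simp add: scaleR_diff_right)
      show "(1/s) *\<^sub>R ((I (s+h) - I s) /\<^sub>R h - (I (0+h) - I 0) /\<^sub>R h) = (S h ((1/s) *\<^sub>R I s) - (1/s) *\<^sub>R I s) /\<^sub>R h"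
        unfolding e2 using h I0 by (simp add: scaleR_diff_right)
    qed
    then have "((\<lambda>h. (S h ((1/s) *\<^sub>R I s) - (1/s) *\<^sub>R I s) /\<^sub>R h) \<longlongrightarrow> (1/s) *\<^sub>R (S s x - x)) (at_right 0)"
      using lim tendsto_cong by fastforce
    then show ?thesis using gen_domI by blast
  qed
  have "((\<lambda>s. (1/s) *\<^sub>R I s) \<longlongrightarrow> x) (at_right 0)"
    using Ideriv0[of x] unfolding I_def by (simp add: divide_inverse)
  then have "\<forall>\<^sub>F s in at_right 0. dist ((1/s) *\<^sub>R I s) x < e" using e tendsto_iff[THEN iffD1] by blast
  then obtain b where b: "b > 0" "\<forall>s>0. s < b \<longrightarrow> dist ((1/s) *\<^sub>R I s) x < e"
    unfolding eventually_at_right_field by auto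
  have "dist ((1/(b/2)) *\<^sub>R I (b/2)) x < e" using b(2)[rule_format, of "b/2"] b(1) by simp
  moreover have "(1/(b/2)) *\<^sub>R I (b/2) \<in> gen_dom S" using indom[of "b/2"] b(1) by simp
  ultimately show ?thesis by (metis dist_norm norm_minus_commute)
qed

end

context c0sg begin

lemma unif_small:
  fixes f :: "real \<Rightarrow> 'a"
  assumes f: "continuous_on {0..T} f" and e: "e > 0"
  shows "\<exists>d>0. \<forall>r s. 0 \<le> r \<and> r \<le> d \<and> s \<in> {0..T} \<longrightarrow> norm (S r (f s) - f s) \<le> e"
proof -
  define P where "P = {0..1::real} \<times> {0..T}"
  define g where "g p = S (fst p) (f (snd p))" for p
  obtain K where K: "K \<ge> 1" "\<forall>t. 0 \<le> t \<and> t \<le> 1 \<longrightarrow> onorm (S t) \<le> K" using loc_bound by blast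
  have "continuous_on P g"
  proof (unfold continuous_on_iff, intro ballI allI impI)
    fix p0 and \<epsilon> :: real assume p0: "p0 \<in> P" and eps: "\<epsilon> > 0"
    obtain r0 s0 where p0eq: "p0 = (r0, s0)" by (cases p0)
    have r0: "0 \<le> r0" "r0 \<le> 1" and s0: "s0 \<in> {0..T}" using p0 p0eq P_def by auto
    have "\<epsilon> / (2 * K) > 0" using eps K by simp
    then obtain d1 where d1: "d1 > 0" "\<forall>s\<in>{0..T}. dist s s0 < d1 \<longrightarrow> dist (f s) (f s0) < \<epsilon> / (2 * K)"
      using f s0 unfolding continuous_on_iff by blast
    have "\<epsilon> / 2 > 0" using eps by simp
    then obtain d2 where d2: "d2 > 0" "\<forall>r\<in>{0..}. dist r r0 < d2 \<longrightarrow> dist (S r (f s0)) (S r0 (f s0)) < \<epsilon> / 2"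
      using orbit_cont[of "f s0"] r0 unfolding continuous_on_iff by (meson atLeast_iff)
    show "\<exists>d>0. \<forall>p\<in>P. dist p p0 < d \<longrightarrow> dist (g p) (g p0) < \<epsilon>"
    proof (intro exI[of _ "min d1 d2"] conjI ballI impI)
      show "0 < min d1 d2" using d1 d2 by simp
      fix p assume p: "p \<in> P" "dist p p0 < min d1 d2"
      obtain r s where peq: "p = (r, s)" by (cases p)
      have r: "0 \<le> r" "r \<le> 1" and s: "s \<in> {0..T}" using p peq P_def by auto
      have dr: "dist r r0 < d2" and ds: "dist s s0 < d1"
        using p(2) dist_fst_le[of p p0] dist_snd_le[of p p0] peq p0eq by auto
      have "dist (g p) (g p0) = norm (S r (f s) - S r0 (f s0))"
        by (simp add: g_def peq p0eq dist_norm)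
      also have "\<dots> \<le> norm (S r (f s) - S r (f s0)) + norm (S r (f s0) - S r0 (f s0))"
        using norm_triangle_ineq[of "S r (f s) - S r (f s0)" "S r (f s0) - S r0 (f s0)"] by simp
      also have "norm (S r (f s) - S r (f s0)) \<le> K * norm (f s - f s0)"
        using r K by (simp add: Sdiff[symmetric] nb)
      also have "K * norm (f s - f s0) < K * (\<epsilon> / (2 * K))"
        using d1 s ds K by (intro mult_strict_left_mono) (auto simp: dist_norm)
      also have "norm (S r (f s0) - S r0 (f s0)) < \<epsilon> / 2"
        using d2 r dr by (auto simp: dist_norm)
      finally show "dist (g p) (g p0) < \<epsilon>" using K by simp
    qed
  qed
  moreover have "compact P" unfolding P_def by (intro compact_Times compact_Icc)
  ultimately have uc: "uniformly_continuous_on P g" by (rule compact_uniformly_continuous)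
  obtain d where d: "d > 0" "\<forall>p\<in>P. \<forall>p'\<in>P. dist p' p < d \<longrightarrow> dist (g p') (g p) < e"
    using uc e unfolding uniformly_continuous_on_def by blast
  show ?thesis
  proof (intro exI[of _ "min (d/2) 1"] conjI allI impI)
    show "0 < min (d/2) 1" using d by simp
    fix r s assume rs: "0 \<le> r \<and> r \<le> min (d/2) 1 \<and> s \<in> {0..T}"
    have "(r, s) \<in> P" "(0, s) \<in> P" using rs by (auto simp: P_def)
    moreover have "dist (r, s) (0, s) < d" using rs d by (simp add: dist_Pair_Pair dist_real_def)
    ultimately have "dist (g (r, s)) (g (0, s)) < e" using d by blast
    then show "norm (S r (f s) - f s) \<le> e" by (simp add: g_def dist_norm)
  qed
qed

end

lemma contr_c0: "contraction_semigroup E \<Longrightarrow> c0sg E"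
  by (simp add: contraction_semigroup_def c0sg_def)

lemma contr_nb:
  assumes E: "contraction_semigroup E" and t: "0 \<le> t"
  shows "norm (E t x) \<le> norm x"
proof -
  interpret c0sg E by (rule contr_c0[OF E])
  have "onorm (E t) \<le> 1" using E t by (simp add: contraction_semigroup_def)
  then show ?thesis using nb[OF t, of 1 x] by simp
qed

lemma Xop_props:
  assumes E: "contraction_semigroup E" and B: "bounded_linear B" and tau: "0 \<le> \<tau>"
  shows "bounded_linear (Xop E B \<tau>)" and "norm (Xop E B \<tau> v) \<le> \<tau> * onorm B * norm v"
proof -
  interpret c0sg E by (rule contr_c0[OF E])
  have bnd: "norm (Xop E B \<tau> v) \<le> \<tau> * onorm B * norm v" for v
  proof -
    have "norm (Xop E B \<tau> v) \<le> (onorm B * norm v) * (\<tau> - 0)"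
      unfolding Xop_def
    proof (rule int_bound)
      show "(\<lambda>\<sigma>. E \<sigma> (B v)) integrable_on {0..\<tau>}" by (rule orbit_int)
      show "0 \<le> \<tau>" by (rule tau)
      fix r assume "r \<in> {0..\<tau>}"
      then have "norm (E r (B v)) \<le> norm (B v)" using contr_nb[OF E] by simp
      also have "\<dots> \<le> onorm B * norm v" by (rule onorm[OF B])
      finally show "norm (E r (B v)) \<le> onorm B * norm v" .
    qed
    then show ?thesis by (simp add: mult_ac)
  qed
  show "norm (Xop E B \<tau> v) \<le> \<tau> * onorm B * norm v" by (rule bnd)
  show "bounded_linear (Xop E B \<tau>)"
  proof (rule bounded_linear_intro[where K = "\<tau> * onorm B"])
    fix v w
    have "Xop E B \<tau> (v + w) = integral {0..\<tau>} (\<lambda>\<sigma>. E \<sigma> (B v) + E \<sigma> (B w))"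
      unfolding Xop_def
      by (rule integral_cong) (simp add: linear_add[OF bounded_linear.linear[OF B]] Sadd)
    also have "\<dots> = Xop E B \<tau> v + Xop E B \<tau> w"
      unfolding Xop_def by (rule integral_add[OF orbit_int orbit_int])
    finally show "Xop E B \<tau> (v + w) = Xop E B \<tau> v + Xop E B \<tau> w" .
  next
    fix c v
    have "Xop E B \<tau> (c *\<^sub>R v) = integral {0..\<tau>} (\<lambda>\<sigma>. c *\<^sub>R E \<sigma> (B v))"
      unfolding Xop_def
      by (rule integral_cong) (simp add: linear_scale[OF bounded_linear.linear[OF B]] Sscale)
    also have "\<dots> = c *\<^sub>R Xop E B \<tau> v" unfolding Xop_def by (rule integral_cmul)
    finally show "Xop E B \<tau> (c *\<^sub>R v) = c *\<^sub>R Xop E B \<tau> v" .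
  next
    fix v show "norm (Xop E B \<tau> v) \<le> norm v * (\<tau> * onorm B)" using bnd[of v] by (simp add: mult_ac)
  qed
qed

lemma sq_ineq:
  fixes p q \<epsilon> A :: real
  assumes "0 \<le> p" "0 \<le> q" "0 \<le> \<epsilon>" "0 \<le> A" "A \<le> p + \<epsilon> * q"
  shows "sqrt (A\<^sup>2 + q\<^sup>2) \<le> (1 + \<epsilon>) * sqrt (p\<^sup>2 + q\<^sup>2)"
proof -
  have "A\<^sup>2 \<le> (p + \<epsilon> * q)\<^sup>2" using assms by (intro power_mono) auto
  moreover have "(1 + \<epsilon>)\<^sup>2 * (p\<^sup>2 + q\<^sup>2) - ((p + \<epsilon> * q)\<^sup>2 + q\<^sup>2) = 2 * \<epsilon> * ((p - q)\<^sup>2 + p * q) + \<epsilon>\<^sup>2 * p\<^sup>2"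
    by (simp add: power2_eq_square algebra_simps)
  moreover have "0 \<le> 2 * \<epsilon> * ((p - q)\<^sup>2 + p * q) + \<epsilon>\<^sup>2 * p\<^sup>2" using assms by simp
  ultimately have "A\<^sup>2 + q\<^sup>2 \<le> (1 + \<epsilon>)\<^sup>2 * (p\<^sup>2 + q\<^sup>2)" by linarith
  then have "sqrt (A\<^sup>2 + q\<^sup>2) \<le> sqrt ((1 + \<epsilon>)\<^sup>2 * (p\<^sup>2 + q\<^sup>2))" by (rule real_sqrt_le_mono)
  also have "\<dots> = (1 + \<epsilon>) * sqrt (p\<^sup>2 + q\<^sup>2)" using assms by (simp add: real_sqrt_mult)
  finally show ?thesis .
qed

lemma funpow_props:
  fixes f :: "'a::real_normed_vector \<Rightarrow> 'a"
  assumes "bounded_linear f"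
  shows "bounded_linear (f ^^ n) \<and> onorm (f ^^ n) \<le> onorm f ^ n"
proof (induction n)
  case 0
  have "bounded_linear (\<lambda>x::'a. x)" by (rule bounded_linear_ident)
  moreover have "f ^^ 0 = (\<lambda>x. x)" by (simp add: id_def)
  ultimately show ?case using onorm_id_le by (simp add: id_def)
next
  case (Suc n)
  have bl: "bounded_linear (f ^^ Suc n)" using bounded_linear_compose[OF assms conjunct1[OF Suc]] by (simp add: o_def)
  have "onorm (f ^^ Suc n) \<le> onorm f * onorm (f ^^ n)"
    using Suc assms by (simp add: onorm_compose)
  also have "\<dots> \<le> onorm f * onorm f ^ n"
    using Suc assms by (intro mult_left_mono onorm_pos_le) auto
  finally show ?case using bl by (simp del: comp_apply)
qed

lemma T1_props:
  fixes E1 :: "real \<Rightarrow> 'a::banach \<Rightarrow> 'a" and B1 :: "'b::banach \<Rightarrow> 'a"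
  assumes E: "contraction_semigroup E1" and B: "bounded_linear B1" and tau: "0 \<le> \<tau>"
  shows "bounded_linear (split_T1 E1 B1 \<tau>)"
    and "norm (split_T1 E1 B1 \<tau> p) \<le> (1 + \<tau> * onorm B1) * norm p"
proof -
  interpret c0sg E1 by (rule contr_c0[OF E])
  note X = Xop_props[OF E B tau]
  have bnd: "norm (split_T1 E1 B1 \<tau> p) \<le> (1 + \<tau> * onorm B1) * norm p" for p
  proof -
    obtain a c where p: "p = (a, c)" by (cases p)
    have A: "norm (E1 \<tau> a + Xop E1 B1 \<tau> c) \<le> norm a + \<tau> * onorm B1 * norm c"
      using norm_triangle_ineq[of "E1 \<tau> a" "Xop E1 B1 \<tau> c"] contr_nb[OF E tau, of a] X(2)[of c] by linarith
    have "norm (split_T1 E1 B1 \<tau> p) = sqrt ((norm (E1 \<tau> a + Xop E1 B1 \<tau> c))\<^sup>2 + (norm c)\<^sup>2)"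
      by (simp add: p split_T1_def norm_Pair)
    also have "\<dots> \<le> (1 + \<tau> * onorm B1) * sqrt ((norm a)\<^sup>2 + (norm c)\<^sup>2)"
      by (rule sq_ineq) (use A tau onorm_pos_le[OF B] in \<open>auto simp: mult_ac\<close>)
    also have "\<dots> = (1 + \<tau> * onorm B1) * norm p" by (simp add: p norm_Pair)
    finally show ?thesis .
  qed
  show "norm (split_T1 E1 B1 \<tau> p) \<le> (1 + \<tau> * onorm B1) * norm p" by (rule bnd)
  show "bounded_linear (split_T1 E1 B1 \<tau>)"
  proof (rule bounded_linear_intro[where K = "1 + \<tau> * onorm B1"])
    fix p q
    show "split_T1 E1 B1 \<tau> (p + q) = split_T1 E1 B1 \<tau> p + split_T1 E1 B1 \<tau> q"
      using tau by (simp add: split_T1_def Sadd linear_add[OF bounded_linear.linear[OF X(1)]])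
  next
    fix c p
    show "split_T1 E1 B1 \<tau> (c *\<^sub>R p) = c *\<^sub>R split_T1 E1 B1 \<tau> p"
      using tau by (simp add: split_T1_def Sscale linear_scale[OF bounded_linear.linear[OF X(1)]] scaleR_add_right)
  next
    fix p show "norm (split_T1 E1 B1 \<tau> p) \<le> norm p * (1 + \<tau> * onorm B1)" using bnd[of p] by (simp add: mult_ac)
  qed
qed

lemma T2_props:
  fixes E2 :: "real \<Rightarrow> 'b::banach \<Rightarrow> 'b" and B2 :: "'a::banach \<Rightarrow> 'b"
  assumes E: "contraction_semigroup E2" and B: "bounded_linear B2" and tau: "0 \<le> \<tau>"
  shows "bounded_linear (split_T2 E2 B2 \<tau>)"
    and "norm (split_T2 E2 B2 \<tau> p) \<le> (1 + \<tau> * onorm B2) * norm p"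
proof -
  interpret c0sg E2 by (rule contr_c0[OF E])
  note X = Xop_props[OF E B tau]
  have bnd: "norm (split_T2 E2 B2 \<tau> p) \<le> (1 + \<tau> * onorm B2) * norm p" for p
  proof -
    obtain a c where p: "p = (a, c)" by (cases p)
    have A: "norm (Xop E2 B2 \<tau> a + E2 \<tau> c) \<le> norm c + \<tau> * onorm B2 * norm a"
      using norm_triangle_ineq[of "Xop E2 B2 \<tau> a" "E2 \<tau> c"] contr_nb[OF E tau, of c] X(2)[of a] by linarith
    have "norm (split_T2 E2 B2 \<tau> p) = sqrt ((norm (Xop E2 B2 \<tau> a + E2 \<tau> c))\<^sup>2 + (norm a)\<^sup>2)"
      by (simp add: p split_T2_def norm_Pair add.commute)
    also have "\<dots> \<le> (1 + \<tau> * onorm B2) * sqrt ((norm c)\<^sup>2 + (norm a)\<^sup>2)"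
      by (rule sq_ineq) (use A tau onorm_pos_le[OF B] in \<open>auto simp: mult_ac\<close>)
    also have "\<dots> = (1 + \<tau> * onorm B2) * norm p" by (simp add: p norm_Pair add.commute)
    finally show ?thesis .
  qed
  show "norm (split_T2 E2 B2 \<tau> p) \<le> (1 + \<tau> * onorm B2) * norm p" by (rule bnd)
  show "bounded_linear (split_T2 E2 B2 \<tau>)"
  proof (rule bounded_linear_intro[where K = "1 + \<tau> * onorm B2"])
    fix p q
    show "split_T2 E2 B2 \<tau> (p + q) = split_T2 E2 B2 \<tau> p + split_T2 E2 B2 \<tau> q"
      using tau by (simp add: split_T2_def Sadd linear_add[OF bounded_linear.linear[OF X(1)]])
  next
    fix c p
    show "split_T2 E2 B2 \<tau> (c *\<^sub>R p) = c *\<^sub>R split_T2 E2 B2 \<tau> p"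
      using tau by (simp add: split_T2_def Sscale linear_scale[OF bounded_linear.linear[OF X(1)]] scaleR_add_right)
  next
    fix p show "norm (split_T2 E2 B2 \<tau> p) \<le> norm p * (1 + \<tau> * onorm B2)" using bnd[of p] by (simp add: mult_ac)
  qed
qed

lemma T_props:
  fixes E1 :: "real \<Rightarrow> 'a::banach \<Rightarrow> 'a" and B1 :: "'b::banach \<Rightarrow> 'a"
    and E2 :: "real \<Rightarrow> 'b::banach \<Rightarrow> 'b" and B2 :: "'a::banach \<Rightarrow> 'b"
  assumes E1: "contraction_semigroup E1" and B1: "bounded_linear B1"
    and E2: "contraction_semigroup E2" and B2: "bounded_linear B2" and tau: "0 \<le> \<tau>"
  shows "bounded_linear (split_T E1 E2 B1 B2 \<tau>)"
    and "norm (split_T E1 E2 B1 B2 \<tau> p) \<le> exp (\<tau> * (onorm B1 + onorm B2)) * norm p"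
    and "onorm (split_T E1 E2 B1 B2 \<tau>) \<le> exp (\<tau> * (onorm B1 + onorm B2))"
proof -
  note P1 = T1_props[OF E1 B1 tau] and P2 = T2_props[OF E2 B2 tau]
  show bl: "bounded_linear (split_T E1 E2 B1 B2 \<tau>)"
    unfolding split_T_def using bounded_linear_compose[OF P2(1) P1(1)] by (simp add: o_def)
  have b1: "0 \<le> \<tau> * onorm B1" and b2: "0 \<le> \<tau> * onorm B2" using tau onorm_pos_le[OF B1] onorm_pos_le[OF B2] by auto
  have bnd: "norm (split_T E1 E2 B1 B2 \<tau> q) \<le> exp (\<tau> * (onorm B1 + onorm B2)) * norm q" for q
  proof -
    have "norm (split_T E1 E2 B1 B2 \<tau> q) \<le> (1 + \<tau> * onorm B2) * norm (split_T1 E1 B1 \<tau> q)"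
      unfolding split_T_def using P2(2) by simp
    also have "\<dots> \<le> (1 + \<tau> * onorm B2) * ((1 + \<tau> * onorm B1) * norm q)"
      using P1(2) b2 by (intro mult_left_mono) auto
    also have "\<dots> = ((1 + \<tau> * onorm B1) * (1 + \<tau> * onorm B2)) * norm q" by (simp add: mult_ac)
    also have "\<dots> \<le> (exp (\<tau> * onorm B1) * exp (\<tau> * onorm B2)) * norm q"
      using b1 b2 by (intro mult_right_mono mult_mono) (auto intro: exp_ge_add_one_self)
    also have "exp (\<tau> * onorm B1) * exp (\<tau> * onorm B2) = exp (\<tau> * (onorm B1 + onorm B2))"
      by (simp add: exp_add[symmetric] algebra_simps)
    finally show ?thesis .
  qed
  show "norm (split_T E1 E2 B1 B2 \<tau> p) \<le> exp (\<tau> * (onorm B1 + onorm B2)) * norm p" by (rule bnd)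
  show "onorm (split_T E1 E2 B1 B2 \<tau>) \<le> exp (\<tau> * (onorm B1 + onorm B2))"
    by (rule onorm_bound) (use bnd in auto)
qed

lemma nfst: "norm (fst p) \<le> norm p"
  using norm_fst_le[of "fst p" "snd p"] by simp
lemma nsnd: "norm (snd p) \<le> norm p"
  using norm_snd_le[of "snd p" "fst p"] by simp

lemma pc:
  fixes E1 :: "real \<Rightarrow> 'a::banach \<Rightarrow> 'a"
    and E2 :: "real \<Rightarrow> 'b::banach \<Rightarrow> 'b"
    and B1 :: "'b \<Rightarrow> 'a" and B2 :: "'a \<Rightarrow> 'b"
    and U :: "real \<Rightarrow> 'a \<times> 'b \<Rightarrow> 'a \<times> 'b"
  assumes E1: "contraction_semigroup E1"
    and E2: "contraction_semigroup E2"
    and B1: "bounded_linear B1"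
    and B2: "bounded_linear B2"
    and U_sg: "C0_semigroup U"
    and U_dom: "gen_dom U = gen_dom E1 \<times> gen_dom E2"
    and U_gen: "\<And>u v. u \<in> gen_dom E1 \<Longrightarrow> v \<in> gen_dom E2 \<Longrightarrow>
                  gen U (u, v) = (gen E1 u + B1 v, B2 u + gen E2 v)"
    and z: "(u, v) \<in> gen_dom U" and tau: "0 \<le> \<tau>"
    and w_def: "w = gen U (u, v)"
    and hU: "\<forall>r\<in>{0..\<tau>}. norm (U r w - w) \<le> \<eta>"
    and h1: "\<forall>r\<in>{0..\<tau>}. norm (E1 r (fst w) - fst w) \<le> \<eta>"
    and h2: "\<forall>r\<in>{0..\<tau>}. norm (E2 r (snd w) - snd w) \<le> \<eta>"
    and hu: "norm (E1 \<tau> u - u) \<le> \<eta>"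
  shows "norm (U \<tau> (u, v) - split_T E1 E2 B1 B2 \<tau> (u, v))
           \<le> \<tau> * (4 * \<eta> + onorm B2 * (\<eta> + \<tau> * onorm B1 * norm v))"
proof -
  interpret U: c0sg U by (simp add: c0sg_def U_sg)
  interpret F1: c0sg E1 by (rule contr_c0[OF E1])
  interpret F2: c0sg E2 by (rule contr_c0[OF E2])
  note X1 = Xop_props[OF E1 B1 tau] and X2 = Xop_props[OF E2 B2 tau]
  have u: "u \<in> gen_dom E1" and v: "v \<in> gen_dom E2" using z U_dom by auto
  have w: "fst w = gen E1 u + B1 v" "snd w = B2 u + gen E2 v" using U_gen[OF u v] w_def by auto
  have IU: "U \<tau> (u, v) - (u, v) = integral {0..\<tau>} (\<lambda>r. U r w)"
    using U.int_formula[OF z tau] w_def by simp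
  have IUf: "fst (U \<tau> (u, v)) - u = integral {0..\<tau>} (\<lambda>r. fst (U r w))"
  proof -
    have "fst (U \<tau> (u, v)) - u = fst (integral {0..\<tau>} (\<lambda>r. U r w))" using IU by (metis fst_diff fst_conv)
    also have "\<dots> = integral {0..\<tau>} (fst \<circ> (\<lambda>r. U r w))"
      by (rule integral_linear[symmetric, OF U.orbit_int bounded_linear_fst])
    finally show ?thesis by (simp add: o_def)
  qed
  have IUs: "snd (U \<tau> (u, v)) - v = integral {0..\<tau>} (\<lambda>r. snd (U r w))"
  proof -
    have "snd (U \<tau> (u, v)) - v = snd (integral {0..\<tau>} (\<lambda>r. U r w))" using IU by (metis snd_diff snd_conv)
    also have "\<dots> = integral {0..\<tau>} (snd \<circ> (\<lambda>r. U r w))"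
      by (rule integral_linear[symmetric, OF U.orbit_int bounded_linear_snd])
    finally show ?thesis by (simp add: o_def)
  qed
  have IE1: "E1 \<tau> u - u = integral {0..\<tau>} (\<lambda>r. E1 r (gen E1 u))" by (rule F1.int_formula[OF u tau])
  have IE2: "E2 \<tau> v - v = integral {0..\<tau>} (\<lambda>r. E2 r (gen E2 v))" by (rule F2.int_formula[OF v tau])
  define a where "a = E1 \<tau> u + Xop E1 B1 \<tau> v"
  have Tuv: "split_T E1 E2 B1 B2 \<tau> (u, v) = (a, Xop E2 B2 \<tau> a + E2 \<tau> v)"
    by (simp add: split_T_def split_T1_def split_T2_def a_def)
  have Tf: "a - u = integral {0..\<tau>} (\<lambda>r. E1 r (fst w))"
  proof -
    have "a - u = integral {0..\<tau>} (\<lambda>r. E1 r (gen E1 u)) + integral {0..\<tau>} (\<lambda>r. E1 r (B1 v))"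
      unfolding a_def Xop_def using IE1 by (simp add: algebra_simps)
    also have "\<dots> = integral {0..\<tau>} (\<lambda>r. E1 r (gen E1 u) + E1 r (B1 v))"
      by (rule integral_add[symmetric, OF F1.orbit_int F1.orbit_int])
    also have "\<dots> = integral {0..\<tau>} (\<lambda>r. E1 r (fst w))"
      by (rule integral_cong) (simp add: w F1.Sadd)
    finally show ?thesis .
  qed
  have Df: "fst (U \<tau> (u, v)) - a = integral {0..\<tau>} (\<lambda>r. fst (U r w) - E1 r (fst w))"
  proof -
    have "fst (U \<tau> (u, v)) - a = (fst (U \<tau> (u, v)) - u) - (a - u)" by simp
    also have "\<dots> = integral {0..\<tau>} (\<lambda>r. fst (U r w)) - integral {0..\<tau>} (\<lambda>r. E1 r (fst w))"
      using IUf Tf by simp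
    also have "\<dots> = integral {0..\<tau>} (\<lambda>r. fst (U r w) - E1 r (fst w))"
    proof (rule integral_diff[symmetric])
      show "(\<lambda>r. fst (U r w)) integrable_on {0..\<tau>}"
        using integrable_linear[OF U.orbit_int bounded_linear_fst] by (simp add: o_def)
      show "(\<lambda>r. E1 r (fst w)) integrable_on {0..\<tau>}" by (rule F1.orbit_int)
    qed
    finally show ?thesis .
  qed
  have nDf: "norm (fst (U \<tau> (u, v)) - a) \<le> (2 * \<eta>) * (\<tau> - 0)"
    unfolding Df
  proof (rule int_bound)
    show "(\<lambda>r. fst (U r w) - E1 r (fst w)) integrable_on {0..\<tau>}"
      using integrable_diff[OF integrable_linear[OF U.orbit_int bounded_linear_fst] F1.orbit_int]
      by (simp add: o_def)
    show "0 \<le> \<tau>" by (rule tau)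
    fix r assume r: "r \<in> {0..\<tau>}"
    have "fst (U r w) - E1 r (fst w) = fst (U r w - w) - (E1 r (fst w) - fst w)" by simp
    also have "norm \<dots> \<le> norm (fst (U r w - w)) + norm (E1 r (fst w) - fst w)" by (rule norm_triangle_ineq4)
    also have "\<dots> \<le> norm (U r w - w) + \<eta>" using h1 r nfst[of "U r w - w"] by (intro add_mono) auto
    also have "\<dots> \<le> 2 * \<eta>" using hU r by simp
    finally show "norm (fst (U r w) - E1 r (fst w)) \<le> 2 * \<eta>" .
  qed
  have Ts: "Xop E2 B2 \<tau> a + E2 \<tau> v - v = integral {0..\<tau>} (\<lambda>r. E2 r (snd w)) + Xop E2 B2 \<tau> (a - u)"
  proof -
    have lin2: "Xop E2 B2 \<tau> a = Xop E2 B2 \<tau> u + Xop E2 B2 \<tau> (a - u)"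
      using linear_add[OF bounded_linear.linear[OF X2(1)], of u "a - u"] by simp
    have "integral {0..\<tau>} (\<lambda>r. E2 r (snd w)) = integral {0..\<tau>} (\<lambda>r. E2 r (B2 u) + E2 r (gen E2 v))"
      by (rule integral_cong) (simp add: w F2.Sadd)
    also have "\<dots> = Xop E2 B2 \<tau> u + (E2 \<tau> v - v)"
      unfolding Xop_def IE2 by (rule integral_add[OF F2.orbit_int F2.orbit_int])
    finally show ?thesis using lin2 by (simp add: algebra_simps)
  qed
  have Ds: "snd (U \<tau> (u, v)) - (Xop E2 B2 \<tau> a + E2 \<tau> v)
      = integral {0..\<tau>} (\<lambda>r. snd (U r w) - E2 r (snd w)) - Xop E2 B2 \<tau> (a - u)"
  proof -
    have "snd (U \<tau> (u, v)) - (Xop E2 B2 \<tau> a + E2 \<tau> v)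
        = (snd (U \<tau> (u, v)) - v) - (Xop E2 B2 \<tau> a + E2 \<tau> v - v)" by simp
    also have "\<dots> = integral {0..\<tau>} (\<lambda>r. snd (U r w)) - integral {0..\<tau>} (\<lambda>r. E2 r (snd w)) - Xop E2 B2 \<tau> (a - u)"
      using IUs Ts by simp
    also have "integral {0..\<tau>} (\<lambda>r. snd (U r w)) - integral {0..\<tau>} (\<lambda>r. E2 r (snd w))
        = integral {0..\<tau>} (\<lambda>r. snd (U r w) - E2 r (snd w))"
    proof (rule integral_diff[symmetric])
      show "(\<lambda>r. snd (U r w)) integrable_on {0..\<tau>}"
        using integrable_linear[OF U.orbit_int bounded_linear_snd] by (simp add: o_def)
      show "(\<lambda>r. E2 r (snd w)) integrable_on {0..\<tau>}" by (rule F2.orbit_int)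
    qed
    finally show ?thesis .
  qed
  have nI2: "norm (integral {0..\<tau>} (\<lambda>r. snd (U r w) - E2 r (snd w))) \<le> (2 * \<eta>) * (\<tau> - 0)"
  proof (rule int_bound)
    show "(\<lambda>r. snd (U r w) - E2 r (snd w)) integrable_on {0..\<tau>}"
      using integrable_diff[OF integrable_linear[OF U.orbit_int bounded_linear_snd] F2.orbit_int]
      by (simp add: o_def)
    show "0 \<le> \<tau>" by (rule tau)
    fix r assume r: "r \<in> {0..\<tau>}"
    have "snd (U r w) - E2 r (snd w) = snd (U r w - w) - (E2 r (snd w) - snd w)" by simp
    also have "norm \<dots> \<le> norm (snd (U r w - w)) + norm (E2 r (snd w) - snd w)" by (rule norm_triangle_ineq4)
    also have "\<dots> \<le> norm (U r w - w) + \<eta>" using h2 r nsnd[of "U r w - w"] by (intro add_mono) auto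
    also have "\<dots> \<le> 2 * \<eta>" using hU r by simp
    finally show "norm (snd (U r w) - E2 r (snd w)) \<le> 2 * \<eta>" .
  qed
  have nau: "norm (a - u) \<le> \<eta> + \<tau> * onorm B1 * norm v"
  proof -
    have "a - u = (E1 \<tau> u - u) + Xop E1 B1 \<tau> v" by (simp add: a_def)
    then have "norm (a - u) \<le> norm (E1 \<tau> u - u) + norm (Xop E1 B1 \<tau> v)" by (metis norm_triangle_ineq)
    then show ?thesis using hu X1(2)[of v] by linarith
  qed
  have nX: "norm (Xop E2 B2 \<tau> (a - u)) \<le> \<tau> * onorm B2 * (\<eta> + \<tau> * onorm B1 * norm v)"
  proof -
    have "norm (Xop E2 B2 \<tau> (a - u)) \<le> \<tau> * onorm B2 * norm (a - u)" by (rule X2(2))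
    also have "\<dots> \<le> \<tau> * onorm B2 * (\<eta> + \<tau> * onorm B1 * norm v)"
      using nau tau onorm_pos_le[OF B2] by (intro mult_left_mono) auto
    finally show ?thesis .
  qed
  have nDs: "norm (snd (U \<tau> (u, v)) - (Xop E2 B2 \<tau> a + E2 \<tau> v)) \<le> 2 * \<eta> * \<tau> + \<tau> * onorm B2 * (\<eta> + \<tau> * onorm B1 * norm v)"
    unfolding Ds using norm_triangle_ineq4[of "integral {0..\<tau>} (\<lambda>r. snd (U r w) - E2 r (snd w))" "Xop E2 B2 \<tau> (a - u)"] nI2 nX
    by simp
  have "U \<tau> (u, v) - split_T E1 E2 B1 B2 \<tau> (u, v) = (fst (U \<tau> (u, v)) - a, snd (U \<tau> (u, v)) - (Xop E2 B2 \<tau> a + E2 \<tau> v))"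
    unfolding Tuv by (simp add: prod_eq_iff)
  then have "norm (U \<tau> (u, v) - split_T E1 E2 B1 B2 \<tau> (u, v)) \<le> norm (fst (U \<tau> (u, v)) - a) + norm (snd (U \<tau> (u, v)) - (Xop E2 B2 \<tau> a + E2 \<tau> v))"
    by (metis norm_Pair_le)
  also have "\<dots> \<le> 2 * \<eta> * \<tau> + (2 * \<eta> * \<tau> + \<tau> * onorm B2 * (\<eta> + \<tau> * onorm B1 * norm v))"
    using nDf nDs by simp
  also have "\<dots> = \<tau> * (4 * \<eta> + onorm B2 * (\<eta> + \<tau> * onorm B1 * norm v))" by (simp add: algebra_simps)
  finally show ?thesis .
qed

lemma half_aux: "(a::real) > 0 \<Longrightarrow> a * (e / (2 * a)) = e / 2"
  by (simp add: field_simps)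

lemma uc:
  fixes E1 :: "real \<Rightarrow> 'a::banach \<Rightarrow> 'a"
    and E2 :: "real \<Rightarrow> 'b::banach \<Rightarrow> 'b"
    and B1 :: "'b \<Rightarrow> 'a" and B2 :: "'a \<Rightarrow> 'b"
    and U :: "real \<Rightarrow> 'a \<times> 'b \<Rightarrow> 'a \<times> 'b"
  assumes E1: "contraction_semigroup E1"
    and E2: "contraction_semigroup E2"
    and B1: "bounded_linear B1"
    and B2: "bounded_linear B2"
    and U_sg: "C0_semigroup U"
    and U_dom: "gen_dom U = gen_dom E1 \<times> gen_dom E2"
    and U_gen: "\<And>u v. u \<in> gen_dom E1 \<Longrightarrow> v \<in> gen_dom E2 \<Longrightarrow>
                  gen U (u, v) = (gen E1 u + B1 v, B2 u + gen E2 v)"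
    and x: "x \<in> gen_dom U" and eps: "\<epsilon> > 0"
  shows "\<exists>\<delta>>0. \<forall>\<tau> s. 0 \<le> \<tau> \<and> \<tau> \<le> \<delta> \<and> s \<in> {0..t0} \<longrightarrow>
           norm (U \<tau> (U s x) - split_T E1 E2 B1 B2 \<tau> (U s x)) \<le> \<tau> * \<epsilon>"
proof -
  interpret U: c0sg U by (simp add: c0sg_def U_sg)
  interpret F1: c0sg E1 by (rule contr_c0[OF E1])
  interpret F2: c0sg E2 by (rule contr_c0[OF E2])
  define y where "y = gen U x"
  define b1 where "b1 = onorm B1"
  define b2 where "b2 = onorm B2"
  have b1: "0 \<le> b1" and b2: "0 \<le> b2" using onorm_pos_le[OF B1] onorm_pos_le[OF B2] by (auto simp: b1_def b2_def)
  obtain K where K: "K \<ge> 1" "\<forall>t. 0 \<le> t \<and> t \<le> t0 \<longrightarrow> onorm (U t) \<le> K" using U.loc_bound by blast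
  define C where "C = K * norm x"
  have C: "0 \<le> C" using K by (simp add: C_def)
  have nv: "norm (snd (U s x)) \<le> C" if "s \<in> {0..t0}" for s
    using nsnd[of "U s x"] U.nb[of s K x] K that by (auto simp: C_def)
  define \<eta> where "\<eta> = \<epsilon> / (8 + 2 * b2)"
  have eta: "\<eta> > 0" using eps b2 by (simp add: \<eta>_def)
  have nz: "8 + 2 * b2 \<noteq> 0" using b2 by simp
  have "4 * \<eta> + b2 * \<eta> = (4 + b2) * \<eta>" by (simp add: algebra_simps)
  also have "\<dots> = \<epsilon> / 2" unfolding \<eta>_def using nz by (simp add: field_simps)
  finally have eta_eq: "4 * \<eta> + b2 * \<eta> = \<epsilon> / 2" .
  obtain dU where dU: "dU > 0" "\<forall>r s. 0 \<le> r \<and> r \<le> dU \<and> s \<in> {0..t0} \<longrightarrow> norm (U r (U s y) - U s y) \<le> \<eta>"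
    using U.unif_small[OF U.orbit_cont_on eta] by blast
  obtain d1 where d1: "d1 > 0" "\<forall>r s. 0 \<le> r \<and> r \<le> d1 \<and> s \<in> {0..t0} \<longrightarrow> norm (E1 r (fst (U s y)) - fst (U s y)) \<le> \<eta>"
    using F1.unif_small[OF continuous_on_fst[OF U.orbit_cont_on] eta] by blast
  obtain d2 where d2: "d2 > 0" "\<forall>r s. 0 \<le> r \<and> r \<le> d2 \<and> s \<in> {0..t0} \<longrightarrow> norm (E2 r (snd (U s y)) - snd (U s y)) \<le> \<eta>"
    using F2.unif_small[OF continuous_on_snd[OF U.orbit_cont_on] eta] by blast
  obtain d3 where d3: "d3 > 0" "\<forall>r s. 0 \<le> r \<and> r \<le> d3 \<and> s \<in> {0..t0} \<longrightarrow> norm (E1 r (fst (U s x)) - fst (U s x)) \<le> \<eta>"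
    using F1.unif_small[OF continuous_on_fst[OF U.orbit_cont_on] eta] by blast
  define d4 where "d4 = \<epsilon> / (2 * (b1 * b2 * C + 1))"
  have "0 \<le> b1 * b2 * C" using b1 b2 C by simp
  then have d4: "d4 > 0" using eps unfolding d4_def by (intro divide_pos_pos) auto
  define \<delta> where "\<delta> = min (min dU d1) (min (min d2 d3) d4)"
  have \<delta>: "\<delta> > 0" using dU d1 d2 d3 d4 by (simp add: \<delta>_def)
  show ?thesis
  proof (intro exI[of _ \<delta>] conjI allI impI)
    show "\<delta> > 0" by (rule \<delta>)
    fix \<tau> s assume ts: "0 \<le> \<tau> \<and> \<tau> \<le> \<delta> \<and> s \<in> {0..t0}"
    then have tau: "0 \<le> \<tau>" and s: "s \<in> {0..t0}" "0 \<le> s" by auto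
    have zx: "U s x \<in> gen_dom U" and gz: "gen U (U s x) = U s y"
      using U.orbit_dom[OF x s(2)] by (auto simp: y_def)
    define u where "u = fst (U s x)"
    define v where "v = snd (U s x)"
    have uv: "U s x = (u, v)" by (simp add: u_def v_def)
    have "norm (U \<tau> (u, v) - split_T E1 E2 B1 B2 \<tau> (u, v)) \<le> \<tau> * (4 * \<eta> + onorm B2 * (\<eta> + \<tau> * onorm B1 * norm v))"
    proof (rule pc[OF E1 E2 B1 B2 U_sg U_dom U_gen _ tau refl])
      show "(u, v) \<in> gen_dom U" using zx uv by simp
      show "\<forall>r\<in>{0..\<tau>}. norm (U r (gen U (u, v)) - gen U (u, v)) \<le> \<eta>"
        using dU ts s unfolding uv[symmetric] gz by (auto simp: \<delta>_def)
      show "\<forall>r\<in>{0..\<tau>}. norm (E1 r (fst (gen U (u, v))) - fst (gen U (u, v))) \<le> \<eta>"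
        using d1 ts s unfolding uv[symmetric] gz by (auto simp: \<delta>_def)
      show "\<forall>r\<in>{0..\<tau>}. norm (E2 r (snd (gen U (u, v))) - snd (gen U (u, v))) \<le> \<eta>"
        using d2 ts s unfolding uv[symmetric] gz by (auto simp: \<delta>_def)
      show "norm (E1 \<tau> u - u) \<le> \<eta>"
        using d3 ts s unfolding u_def by (auto simp: \<delta>_def)
    qed
    also have "\<tau> * (4 * \<eta> + onorm B2 * (\<eta> + \<tau> * onorm B1 * norm v)) \<le> \<tau> * \<epsilon>"
    proof (rule mult_left_mono[OF _ tau])
      have "b2 * (\<tau> * b1 * norm v) \<le> b2 * (d4 * b1 * C)"
        using ts b1 b2 C nv[OF s(1)] by (intro mult_left_mono mult_mono) (auto simp: \<delta>_def v_def)
      also have "\<dots> = (b1 * b2 * C) * d4" by (simp add: mult_ac)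
      also have "\<dots> \<le> (b1 * b2 * C + 1) * d4" using d4 by simp
      also have "\<dots> = \<epsilon> / 2" unfolding d4_def
        by (rule half_aux) (use b1 b2 C in \<open>simp add: add_nonneg_pos\<close>)
      finally have "b2 * (\<tau> * b1 * norm v) \<le> \<epsilon> / 2" .
      then show "4 * \<eta> + onorm B2 * (\<eta> + \<tau> * onorm B1 * norm v) \<le> \<epsilon>"
        using eta_eq by (simp add: b1_def b2_def algebra_simps)
    qed
    finally show "norm (U \<tau> (U s x) - split_T E1 E2 B1 B2 \<tau> (U s x)) \<le> \<tau> * \<epsilon>" by (simp add: uv)
  qed
qed

lemma tele:
  fixes U :: "real \<Rightarrow> 'c::banach \<Rightarrow> 'c"
  assumes U: "c0sg U" and Tl: "bounded_linear T" and Tn: "\<And>v. norm (T v) \<le> L * norm v"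
    and L: "1 \<le> L" and tau: "0 \<le> \<tau>" and rho: "0 \<le> \<rho>"
    and cons: "\<And>k. k < n \<Longrightarrow> norm (U \<tau> (U (real k * \<tau>) x) - T (U (real k * \<tau>) x)) \<le> \<rho>"
  shows "norm (U (real n * \<tau>) x - (T ^^ n) x) \<le> real n * L ^ n * \<rho>"
proof -
  interpret c0sg U by (rule U)
  have "m \<le> n \<Longrightarrow> norm (U (real m * \<tau>) x - (T ^^ m) x) \<le> real m * L ^ m * \<rho>" for m
  proof (induction m)
    case 0 then show ?case by simp
  next
    case (Suc m)
    have IH: "norm (U (real m * \<tau>) x - (T ^^ m) x) \<le> real m * L ^ m * \<rho>" using Suc by simp
    have mt: "0 \<le> real m * \<tau>" using tau by simp
    have e1: "U (real (Suc m) * \<tau>) x = U \<tau> (U (real m * \<tau>) x)"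
      using comp[OF tau mt] by (simp add: algebra_simps)
    have e2: "(T ^^ Suc m) x = T ((T ^^ m) x)" by simp
    have e3: "T (U (real m * \<tau>) x) - T ((T ^^ m) x) = T (U (real m * \<tau>) x - (T ^^ m) x)"
      using linear_diff[OF bounded_linear.linear[OF Tl]] by simp
    have "U (real (Suc m) * \<tau>) x - (T ^^ Suc m) x
        = (U \<tau> (U (real m * \<tau>) x) - T (U (real m * \<tau>) x)) + T (U (real m * \<tau>) x - (T ^^ m) x)"
      unfolding e1 e2 e3[symmetric] by simp
    then have "norm (U (real (Suc m) * \<tau>) x - (T ^^ Suc m) x)
        \<le> norm (U \<tau> (U (real m * \<tau>) x) - T (U (real m * \<tau>) x)) + norm (T (U (real m * \<tau>) x - (T ^^ m) x))"
      by (metis norm_triangle_ineq)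
    also have "\<dots> \<le> \<rho> + L * (real m * L ^ m * \<rho>)"
    proof (rule add_mono)
      show "norm (U \<tau> (U (real m * \<tau>) x) - T (U (real m * \<tau>) x)) \<le> \<rho>" using cons Suc by simp
      show "norm (T (U (real m * \<tau>) x - (T ^^ m) x)) \<le> L * (real m * L ^ m * \<rho>)"
        using Tn IH L order_trans mult_left_mono by (meson dual_order.trans zero_le_one)
    qed
    also have "\<dots> \<le> L ^ Suc m * \<rho> + real m * L ^ Suc m * \<rho>"
    proof -
      have "1 * \<rho> \<le> L ^ Suc m * \<rho>" by (rule mult_right_mono[OF one_le_power[OF L] rho])
      then have "\<rho> \<le> L ^ Suc m * \<rho>" by simp
      then show ?thesis by (simp add: mult_ac)
    qed
    also have "\<dots> = real (Suc m) * L ^ Suc m * \<rho>" by (simp add: algebra_simps)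
    finally show ?case .
  qed
  then show ?thesis by simp
qed

theorem proposition3p2:
  fixes E1 :: "real \<Rightarrow> 'a::banach \<Rightarrow> 'a"
    and E2 :: "real \<Rightarrow> 'b::banach \<Rightarrow> 'b"
    and B1 :: "'b \<Rightarrow> 'a" and B2 :: "'a \<Rightarrow> 'b"
    and U :: "real \<Rightarrow> 'a \<times> 'b \<Rightarrow> 'a \<times> 'b"
  assumes E1: "contraction_semigroup E1"
    and E2: "contraction_semigroup E2"
    and B1: "bounded_linear B1"
    and B2: "bounded_linear B2"
    and U_sg: "C0_semigroup U"
    and U_dom: "gen_dom U = gen_dom E1 \<times> gen_dom E2"
    and U_gen: "\<And>u v. u \<in> gen_dom E1 \<Longrightarrow> v \<in> gen_dom E2 \<Longrightarrow>
                  gen U (u, v) = (gen E1 u + B1 v, B2 u + gen E2 v)"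
  shows "(\<forall>t\<ge>0. \<forall>n::nat. n > 0 \<longrightarrow>
            onorm (split_T E1 E2 B1 B2 (t / real n) ^^ n) \<le> exp (t * (onorm B1 + onorm B2)))
       \<and> (\<forall>t\<ge>0. \<forall>x. (\<lambda>n. (split_T E1 E2 B1 B2 (t / real n) ^^ n) x) \<longlonglongrightarrow> U t x)
       \<and> (\<forall>t0\<ge>0. \<forall>x. uniform_limit {0..t0}
            (\<lambda>n t. (split_T E1 E2 B1 B2 (t / real n) ^^ n) x) (\<lambda>t. U t x) sequentially)"
proof -
  interpret U: c0sg U by (simp add: c0sg_def U_sg)
  define b where "b = onorm B1 + onorm B2"
  define T where "T = split_T E1 E2 B1 B2"
  note TP = T_props[OF E1 B1 E2 B2]
  have b: "0 \<le> b" using onorm_pos_le[OF B1] onorm_pos_le[OF B2] by (simp add: b_def)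
  have stab: "bounded_linear (T \<tau> ^^ n) \<and> onorm (T \<tau> ^^ n) \<le> exp (real n * \<tau> * b)" if tau: "0 \<le> \<tau>" for \<tau> n
  proof -
    have FP: "bounded_linear (T \<tau> ^^ n) \<and> onorm (T \<tau> ^^ n) \<le> onorm (T \<tau>) ^ n"
      unfolding T_def by (rule funpow_props[OF TP(1)[OF tau]])
    have "onorm (T \<tau>) ^ n \<le> exp (\<tau> * b) ^ n"
      unfolding T_def b_def by (intro power_mono TP(3)[OF tau] onorm_pos_le TP(1)[OF tau])
    also have "\<dots> = exp (real n * \<tau> * b)" by (simp add: exp_of_nat_mult[symmetric] mult_ac)
    finally show ?thesis using FP by simp
  qed
  have stab_norm: "norm ((T \<tau> ^^ n) v) \<le> exp (real n * \<tau> * b) * norm v" if tau: "0 \<le> \<tau>" for \<tau> n v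
    using stab[OF tau, of n] onorm[of "T \<tau> ^^ n" v] by (meson mult_right_mono norm_ge_zero order_trans)
  have nt: "real n * (t / real n) \<le> t0" if "t \<in> {0..t0}" for n t t0
    using that by (cases "n = 0") auto
  have part1: "\<forall>t\<ge>0. \<forall>n::nat. n > 0 \<longrightarrow> onorm (T (t / real n) ^^ n) \<le> exp (t * b)"
  proof (intro allI impI)
    fix t :: real and n :: nat assume t: "0 \<le> t" and n: "n > 0"
    have "0 \<le> t / real n" using t by simp
    then have "onorm (T (t / real n) ^^ n) \<le> exp (real n * (t / real n) * b)" using stab by blast
    also have "real n * (t / real n) = t" using n by simp
    finally show "onorm (T (t / real n) ^^ n) \<le> exp (t * b)" .
  qed
  have D: "\<exists>N. \<forall>n\<ge>N. \<forall>t\<in>{0..t0}. norm ((T (t / real n) ^^ n) x - U t x) < e"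
    if x: "x \<in> gen_dom U" and t0: "0 \<le> t0" and e: "e > 0" for x t0 e
  proof -
    define A where "A = t0 * exp (t0 * b)"
    have A: "0 \<le> A" using t0 by (simp add: A_def)
    define \<epsilon> where "\<epsilon> = e / (2 * (A + 1))"
    have eps: "\<epsilon> > 0" using e A by (simp add: \<epsilon>_def)
    have Aeps: "A * \<epsilon> < e"
    proof -
      have "A * \<epsilon> \<le> (A + 1) * \<epsilon>" using eps by simp
      also have "\<dots> = e / 2" unfolding \<epsilon>_def by (rule half_aux) (use A in simp)
      finally show ?thesis using e by simp
    qed
    obtain \<delta> where \<delta>: "\<delta> > 0" "\<forall>\<tau> s. 0 \<le> \<tau> \<and> \<tau> \<le> \<delta> \<and> s \<in> {0..t0} \<longrightarrow>
           norm (U \<tau> (U s x) - T \<tau> (U s x)) \<le> \<tau> * \<epsilon>"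
      using uc[OF E1 E2 B1 B2 U_sg U_dom U_gen x eps, of t0] unfolding T_def by blast
    define N where "N = nat \<lceil>t0 / \<delta>\<rceil> + 1"
    show ?thesis
    proof (intro exI[of _ N] allI impI ballI)
      fix n t assume n: "N \<le> n" and t: "t \<in> {0..t0}"
      have npos: "real n > 0" using n by (simp add: N_def)
      have "t0 / \<delta> < real n" using n unfolding N_def by linarith
      then have "t0 < real n * \<delta>" using \<delta>(1) by (simp add: field_simps)
      define \<tau> where "\<tau> = t / real n"
      have tau: "0 \<le> \<tau>" using t npos by (simp add: \<tau>_def)
      have ntau: "real n * \<tau> = t" using npos by (simp add: \<tau>_def)
      have taud: "\<tau> \<le> \<delta>"
      proof -
        have "real n * \<tau> \<le> real n * \<delta>" using ntau t \<open>t0 < real n * \<delta>\<close> by simp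
        then show ?thesis using npos by simp
      qed
      have "norm (U (real n * \<tau>) x - (T \<tau> ^^ n) x) \<le> real n * exp (\<tau> * b) ^ n * (\<tau> * \<epsilon>)"
      proof (rule tele[OF _ TP(1)[OF tau, folded T_def]])
        show "c0sg U" by (simp add: c0sg_def U_sg)
        show "norm (T \<tau> v) \<le> exp (\<tau> * b) * norm v" for v unfolding T_def b_def by (rule TP(2)[OF tau])
        show "1 \<le> exp (\<tau> * b)" using tau b by simp
        show "0 \<le> \<tau>" by (rule tau)
        show "0 \<le> \<tau> * \<epsilon>" using tau eps by simp
        fix k assume k: "k < n"
        have "real k * \<tau> \<le> real n * \<tau>" using k tau by (intro mult_right_mono) auto
        then have "real k * \<tau> \<in> {0..t0}" using ntau t tau by auto
        then show "norm (U \<tau> (U (real k * \<tau>) x) - T \<tau> (U (real k * \<tau>) x)) \<le> \<tau> * \<epsilon>"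
          using \<delta>(2) tau taud by blast
      qed
      also have "real n * exp (\<tau> * b) ^ n * (\<tau> * \<epsilon>) = t * exp (t * b) * \<epsilon>"
      proof -
        have "exp (\<tau> * b) ^ n = exp (t * b)" using ntau by (simp add: exp_of_nat_mult[symmetric] mult.assoc[symmetric])
        then show ?thesis using ntau by (simp add: mult_ac)
      qed
      also have "\<dots> \<le> A * \<epsilon>" unfolding A_def
        using t eps b by (intro mult_right_mono mult_mono) (auto intro: mult_right_mono)
      finally have "norm (U t x - (T (t / real n) ^^ n) x) < e" using Aeps ntau by (simp add: \<tau>_def)
      then show "norm ((T (t / real n) ^^ n) x - U t x) < e" by (simp add: norm_minus_commute)
    qed
  qed
  have G: "\<exists>N. \<forall>n\<ge>N. \<forall>t\<in>{0..t0}. norm ((T (t / real n) ^^ n) x - U t x) < e"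
    if t0: "0 \<le> t0" and e: "e > 0" for x t0 e
  proof -
    obtain K where K: "K \<ge> 1" "\<forall>t. 0 \<le> t \<and> t \<le> t0 \<longrightarrow> onorm (U t) \<le> K" using U.loc_bound by blast
    define M where "M = exp (t0 * b) + K"
    have M: "M > 0" using K by (simp add: M_def add_pos_pos)
    have "e / (2 * M) > 0" using e M by simp
    then obtain x' where x': "x' \<in> gen_dom U" "norm (x - x') < e / (2 * M)" using U.dense_dom by blast
    have "e / 2 > 0" using e by simp
    then obtain N where N: "\<forall>n\<ge>N. \<forall>t\<in>{0..t0}. norm ((T (t / real n) ^^ n) x' - U t x') < e / 2"
      using D[OF x'(1) t0] by blast
    show ?thesis
    proof (intro exI[of _ N] allI impI ballI)
      fix n t assume n: "N \<le> n" and t: "t \<in> {0..t0}"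
      define \<tau> where "\<tau> = t / real n"
      have tau: "0 \<le> \<tau>" using t by (simp add: \<tau>_def)
      have lin: "linear (T \<tau> ^^ n)" using stab[OF tau] bounded_linear.linear by blast
      have "(T \<tau> ^^ n) x - U t x = (T \<tau> ^^ n) (x - x') + ((T \<tau> ^^ n) x' - U t x') + U t (x' - x)"
        using linear_diff[OF lin, of x x'] U.Sdiff[of t x' x] t by simp
      then have "norm ((T \<tau> ^^ n) x - U t x) \<le> norm ((T \<tau> ^^ n) (x - x')) + norm ((T \<tau> ^^ n) x' - U t x') + norm (U t (x' - x))"
        by (metis norm_triangle_le norm_triangle_ineq add_mono order_refl)
      also have "norm ((T \<tau> ^^ n) (x - x')) \<le> exp (t0 * b) * norm (x - x')"
      proof -
        have "norm ((T \<tau> ^^ n) (x - x')) \<le> exp (real n * \<tau> * b) * norm (x - x')" by (rule stab_norm[OF tau])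
        also have "\<dots> \<le> exp (t0 * b) * norm (x - x')"
          using nt[OF t, of n] b by (intro mult_right_mono) (auto simp: \<tau>_def mult_right_mono)
        finally show ?thesis .
      qed
      also have "norm (U t (x' - x)) \<le> K * norm (x' - x)" using U.nb[of t K] K t by auto
      also have "norm ((T \<tau> ^^ n) x' - U t x') < e / 2" using N n t by (simp add: \<tau>_def)
      finally have "norm ((T \<tau> ^^ n) x - U t x) < exp (t0 * b) * norm (x - x') + e / 2 + K * norm (x - x')"
        by (simp add: norm_minus_commute)
      also have "\<dots> = M * norm (x - x') + e / 2" by (simp add: M_def algebra_simps)
      also have "\<dots> \<le> M * (e / (2 * M)) + e / 2"
        using mult_left_mono[OF less_imp_le[OF x'(2)], of M] M by simp
      also have "\<dots> = e" using half_aux[OF M, of e] by simp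
      finally show "norm ((T (t / real n) ^^ n) x - U t x) < e" by (simp add: \<tau>_def)
    qed
  qed
  have part3: "\<forall>t0\<ge>0. \<forall>x. uniform_limit {0..t0} (\<lambda>n t. (T (t / real n) ^^ n) x) (\<lambda>t. U t x) sequentially"
  proof (intro allI impI)
    fix t0 :: real and x assume t0: "0 \<le> t0"
    show "uniform_limit {0..t0} (\<lambda>n t. (T (t / real n) ^^ n) x) (\<lambda>t. U t x) sequentially"
      unfolding uniform_limit_iff eventually_sequentially dist_norm using G[OF t0] by blast
  qed
  have part2: "\<forall>t\<ge>0. \<forall>x. (\<lambda>n. (T (t / real n) ^^ n) x) \<longlonglongrightarrow> U t x"
  proof (intro allI impI)
    fix t :: real and x assume t: "0 \<le> t"
    show "(\<lambda>n. (T (t / real n) ^^ n) x) \<longlonglongrightarrow> U t x"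
      using tendsto_uniform_limitI[OF part3[rule_format, OF t, of x], of t] t by simp
  qed
  show ?thesis using part1 part2 part3 unfolding T_def b_def by blast
qed


end
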